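(* Two semifactor sets of a wide ACI-matrix over a field $\mathbb{F}$ cannot be disjoint.
   Context: Let $\mathbb{F}$ be a field. An ACI-matrix is a matrix with entries in $\mathbb{F}[x_1,\dots,x_k]$ whose entries are polynomials of degree at most one and such that no indeterminate appears in two different columns. It is wide if it has more columns than rows. A completion is an assignment of values in $\mathbb{F}$ to all indeterminates; $\mathrm{maxRank}(N)$ is the maximum rank of a completion. ACI-matrices (and blocks) of size $0\times q$ ($q>0$, wide degenerate), $p\times 0$ ($p>0$, tall degenerate) and $0\times0$ (void) are allowed. $N$ is FRmR if $\mathrm{maxRank}(N)=\mathrm{rows}(N)$, FCmR if $\mathrm{maxRank}(N)=\mathrm{cols}(N)$; by convention tall degenerate is FRmR, wide degenerate is FCmR, void is both. For an $m\times n$ block matrix $\begin{bmatrix} A & B\\ 0 & C\end{bmatrix}$ with lower-left $r\times s$ zero block, the zero block is Medium if $r+s=\max\{m,n\}$. For $F=\{f_1<\dots<f_s\}\subseteq\{1,\dots,n\}$ with complement $\{g_1<\dots<g_{n-s}\}$, $Q_F$ is the $n\times n$ permutation matrix such that $MQ_F$ has as columns $f_1,\dots,f_s,g_1,\dots,g_{n-s}$ of $M$ in that order. For an $m\times n$ ACI-matrix $M$, $F$ is a semifactor set of $M$ if there is a nonsingular constant $m\times m$ matrix $R$ with $RMQ_F=\begin{bmatrix} A & B\\ 0 & C\end{bmatrix}$, where $A$ has $\#F$ columns, the zero block is Medium, $A$ is FRmR and $C$ is FCmR. *)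

theory Defs
  imports "Jordan_Normal_Form.DL_Rank"
begin

(* An entry of an ACI-matrix over F[x_1,...,x_k] is a polynomial of degree <= 1,
   represented by its coefficient function p :: nat => 'a:
   p 0 is the constant term and p v (1 <= v <= k) is the coefficient of x_v. *)

definition aci_matrix :: "nat \<Rightarrow> (nat \<Rightarrow> 'a::field) mat \<Rightarrow> bool" where
  "aci_matrix k M \<longleftrightarrow>
     (\<forall>i j t. i < dim_row M \<longrightarrow> j < dim_col M \<longrightarrow> k < t \<longrightarrow> (M $$ (i,j)) t = 0) \<and>
     (\<forall>v\<in>{1..k}. \<forall>i j i' j'. i < dim_row M \<longrightarrow> j < dim_col M \<longrightarrow>
        i' < dim_row M \<longrightarrow> j' < dim_col M \<longrightarrow>
        (M $$ (i,j)) v \<noteq> 0 \<longrightarrow> (M $$ (i',j')) v \<noteq> 0 \<longrightarrow> j = j')"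

definition completion :: "nat \<Rightarrow> (nat \<Rightarrow> 'a::field) \<Rightarrow> (nat \<Rightarrow> 'a) mat \<Rightarrow> 'a mat" where
  "completion k x M = mat (dim_row M) (dim_col M)
     (\<lambda>(i,j). (M $$ (i,j)) 0 + (\<Sum>v\<in>{1..k}. (M $$ (i,j)) v * x v))"

definition mat_rank :: "'a::field mat \<Rightarrow> nat" where
  "mat_rank A = vec_space.rank (dim_row A) A"

definition maxRank :: "nat \<Rightarrow> (nat \<Rightarrow> 'a::field) mat \<Rightarrow> nat" where
  "maxRank k M = Max {mat_rank (completion k x M) | x. True}"

definition FRmR :: "nat \<Rightarrow> (nat \<Rightarrow> 'a::field) mat \<Rightarrow> bool" where
  "FRmR k M \<longleftrightarrow> maxRank k M = dim_row M \<or> dim_col M = 0"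

definition FCmR :: "nat \<Rightarrow> (nat \<Rightarrow> 'a::field) mat \<Rightarrow> bool" where
  "FCmR k M \<longleftrightarrow> maxRank k M = dim_col M \<or> dim_row M = 0"

definition const_mult :: "'a::field mat \<Rightarrow> (nat \<Rightarrow> 'a) mat \<Rightarrow> (nat \<Rightarrow> 'a) mat" where
  "const_mult R M = mat (dim_row R) (dim_col M)
     (\<lambda>(i,j). \<lambda>t. \<Sum>l<dim_col R. R $$ (i,l) * (M $$ (l,j)) t)"

(* M Q_F: columns f_1 < ... < f_s of F, then the complement g_1 < ... in increasing order
   (columns are 0-indexed) *)
definition col_order :: "nat set \<Rightarrow> nat \<Rightarrow> nat list" where
  "col_order F n = sorted_list_of_set F @ sorted_list_of_set ({0..<n} - F)"

definition mult_QF :: "(nat \<Rightarrow> 'a) mat \<Rightarrow> nat set \<Rightarrow> (nat \<Rightarrow> 'a) mat" where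
  "mult_QF M F = mat (dim_row M) (dim_col M) (\<lambda>(i,j). M $$ (i, col_order F (dim_col M) ! j))"

definition block :: "'b mat \<Rightarrow> nat \<Rightarrow> nat \<Rightarrow> nat \<Rightarrow> nat \<Rightarrow> 'b mat" where
  "block N r0 c0 r c = mat r c (\<lambda>(i,j). N $$ (r0 + i, c0 + j))"

definition semifactor_set :: "nat \<Rightarrow> (nat \<Rightarrow> 'a::field) mat \<Rightarrow> nat set \<Rightarrow> bool" where
  "semifactor_set k M F \<longleftrightarrow>
     F \<subseteq> {0..<dim_col M} \<and>
     (\<exists>R r. R \<in> carrier_mat (dim_row M) (dim_row M) \<and> invertible_mat R \<and>
        r \<le> dim_row M \<and> r + card F = max (dim_row M) (dim_col M) \<and>
        (let N = const_mult R (mult_QF M F);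
             m = dim_row M; n = dim_col M; s = card F in
           (\<forall>i<r. \<forall>j<s. N $$ (m - r + i, j) = (\<lambda>_. 0)) \<and>
           FRmR k (block N 0 0 (m - r) s) \<and>
           FCmR k (block N (m - r) s r (n - s))))"

end

theory Submission
  imports Defs
begin

definition evp :: "nat \<Rightarrow> (nat \<Rightarrow> 'a::field) \<Rightarrow> (nat \<Rightarrow> 'a) \<Rightarrow> 'a" where
  "evp k x p = p 0 + (\<Sum>v\<in>{1..k}. p v * x v)"

lemma evp_const_mult:
  assumes "i < dim_row R" "j < dim_col P"
  shows "evp k x (const_mult R P $$ (i,j)) = (\<Sum>l<dim_col R. R $$ (i,l) * evp k x (P $$ (l,j)))"
  using assms
  apply (simp add: const_mult_def evp_def sum_distrib_left sum_distrib_right sum.distrib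
      algebra_simps)
  by (rule sum.swap)

lemma evp_zero[simp]: "evp k x (\<lambda>_. 0) = 0"
  by (simp add: evp_def)

lemma completion_entry:
  "i < dim_row A \<Longrightarrow> j < dim_col A \<Longrightarrow> completion k x A $$ (i,j) = evp k x (A $$ (i,j))"
  by (simp add: completion_def evp_def)

lemma completion_dims[simp]:
  "dim_row (completion k x A) = dim_row A" "dim_col (completion k x A) = dim_col A"
  by (simp_all add: completion_def)

lemma const_mult_dims[simp]:
  "dim_row (const_mult R P) = dim_row R" "dim_col (const_mult R P) = dim_col P"
  by (simp_all add: const_mult_def)

lemma mult_QF_dims[simp]:
  "dim_row (mult_QF M F) = dim_row M" "dim_col (mult_QF M F) = dim_col M"
  by (simp_all add: mult_QF_def)

lemma mult_QF_entry:
  "i < dim_row M \<Longrightarrow> j < dim_col M \<Longrightarrow> mult_QF M F $$ (i,j) = M $$ (i, col_order F (dim_col M) ! j)"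
  by (simp add: mult_QF_def)

lemma block_dims[simp]:
  "dim_row (block N r0 c0 r c) = r" "dim_col (block N r0 c0 r c) = c"
  by (simp_all add: block_def)

lemma block_entry:
  "i < r \<Longrightarrow> j < c \<Longrightarrow> block N r0 c0 r c $$ (i,j) = N $$ (r0+i, c0+j)"
  by (simp add: block_def)

lemma col_order_F:
  assumes "finite F" "j < card F"
  shows "col_order F n ! j = sorted_list_of_set F ! j"
  using assms by (simp add: col_order_def nth_append)

lemma col_order_H:
  assumes "finite F"
  shows "col_order F n ! (card F + j) = sorted_list_of_set ({0..<n} - F) ! j"
  using assms by (simp add: col_order_def nth_append)

lemma sum_sorted_nth:
  assumes "finite S"
  shows "(\<Sum>j<card S. f (sorted_list_of_set S ! j)) = sum f S"
proof -
  have "sum f S = sum f (set (sorted_list_of_set S))" using assms by simp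
  also have "\<dots> = sum_list (map f (sorted_list_of_set S))"
    by (simp add: sum.distinct_set_conv_list)
  also have "\<dots> = (\<Sum>j<card S. f (sorted_list_of_set S ! j))"
    by (simp add: sum_list_sum_nth atLeast0LessThan)
  finally show ?thesis by simp
qed

lemma sorted_nth_mem:
  assumes "finite S" "j < card S"
  shows "sorted_list_of_set S ! j \<in> S"
  using assms by (metis length_sorted_list_of_set nth_mem set_sorted_list_of_set)

lemma sorted_nth_inj:
  assumes "finite S" "i < card S" "j < card S" "sorted_list_of_set S ! i = sorted_list_of_set S ! j"
  shows "i = j"
  using assms by (metis distinct_sorted_list_of_set length_sorted_list_of_set nth_eq_iff_index_eq)

lemma sorted_nth_surj:
  assumes "finite S" "c \<in> S"
  shows "\<exists>j<card S. sorted_list_of_set S ! j = c"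
  using assms by (metis in_set_conv_nth length_sorted_list_of_set set_sorted_list_of_set)

theorem lemma5p2:
  fixes M :: "(nat \<Rightarrow> 'a::field) mat" and k :: nat and F G :: "nat set"
  assumes "aci_matrix k M"
    and "dim_row M < dim_col M"
    and "semifactor_set k M F"
    and "semifactor_set k M G"
  shows "F \<inter> G \<noteq> {}"
proof
  assume disj: "F \<inter> G = {}"
  define m where "m = dim_row M"
  define n where "n = dim_col M"
  have mn: "m < n" using assms(2) by (simp add: m_def n_def)
  have mx: "max m n = n" using mn by simp
  define sF where "sF = card F"
  define sG where "sG = card G"
  obtain RF rF where rawF: "RF \<in> carrier_mat (dim_row M) (dim_row M) \<and> invertible_mat RF \<and>
        rF \<le> dim_row M \<and> rF + card F = max (dim_row M) (dim_col M) \<and>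
        (let N = const_mult RF (mult_QF M F);
             m = dim_row M; n = dim_col M; s = card F in
           (\<forall>i<rF. \<forall>j<s. N $$ (m - rF + i, j) = (\<lambda>_. 0)) \<and>
           FRmR k (block N 0 0 (m - rF) s) \<and>
           FCmR k (block N (m - rF) s rF (n - s)))"
    using assms(3) unfolding semifactor_set_def by (elim conjE exE) (rule that, intro conjI; assumption)
  have Fsub: "F \<subseteq> {0..<n}" using assms(3) unfolding semifactor_set_def n_def by (elim conjE)
  have RF: "RF \<in> carrier_mat m m" "invertible_mat RF" "rF \<le> m" "rF + sF = n"
    using rawF mx unfolding m_def[symmetric] n_def[symmetric] sF_def by simp_all
  have FC: "FCmR k (block (const_mult RF (mult_QF M F)) (m - rF) sF rF (n - sF))"
    using rawF unfolding Let_def m_def n_def sF_def by (elim conjE)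
  obtain RG rG where rawG: "RG \<in> carrier_mat (dim_row M) (dim_row M) \<and> invertible_mat RG \<and>
        rG \<le> dim_row M \<and> rG + card G = max (dim_row M) (dim_col M) \<and>
        (let N = const_mult RG (mult_QF M G);
             m = dim_row M; n = dim_col M; s = card G in
           (\<forall>i<rG. \<forall>j<s. N $$ (m - rG + i, j) = (\<lambda>_. 0)) \<and>
           FRmR k (block N 0 0 (m - rG) s) \<and>
           FCmR k (block N (m - rG) s rG (n - s)))"
    using assms(4) unfolding semifactor_set_def by (elim conjE exE) (rule that, intro conjI; assumption)
  have Gsub: "G \<subseteq> {0..<n}" using assms(4) unfolding semifactor_set_def n_def by (elim conjE)
  have RG: "RG \<in> carrier_mat m m" "invertible_mat RG" "rG \<le> m" "rG + sG = n"
    using rawG mx unfolding m_def[symmetric] n_def[symmetric] sG_def by simp_all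
  have GZ: "\<forall>i<rG. \<forall>j<sG. const_mult RG (mult_QF M G) $$ (m - rG + i, j) = (\<lambda>_. 0)"
    using rawG unfolding Let_def m_def n_def sG_def by (elim conjE)
  have finF: "finite F" using Fsub finite_subset by blast
  have finG: "finite G" using Gsub finite_subset by blast
  define H where "H = {0..<n} - F"
  have finH: "finite H" by (simp add: H_def)
  have cardH: "card H = rF" using RF(4) Fsub finF by (simp add: H_def card_Diff_subset sF_def)
  have GH: "G \<subseteq> H" using disj Gsub by (auto simp: H_def)
  have sGpos: "sG > 0" using RG mn by linarith
  have rFpos: "rF > 0"
  proof (rule ccontr)
    assume "\<not> rF > 0"
    then have "H = {}" using cardH finH by simp
    then have "G = {}" using GH by blast
    then show False using sGpos sG_def by simp
  qed
  define C where "C = block (const_mult RF (mult_QF M F)) (m - rF) sF rF (n - sF)"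
  have Cdim: "dim_row C = rF" "dim_col C = rF" using RF(4) by (auto simp: C_def)
  have mr: "maxRank k C = rF" using FC rFpos Cdim unfolding FCmR_def C_def by auto
  define S where "S = {mat_rank (completion k x C) | x. True}"
  have "S \<subseteq> {..rF}"
  proof
    fix r assume "r \<in> S"
    then obtain x where "r = mat_rank (completion k x C)" by (auto simp: S_def)
    moreover have "completion k x C \<in> carrier_mat rF rF" using Cdim by auto
    ultimately show "r \<in> {..rF}"
      using vec_space.rank_le_nc[of "completion k x C" rF rF] by (simp add: mat_rank_def Cdim)
  qed
  then have finS: "finite S" using finite_subset by blast
  have "S \<noteq> {}" by (auto simp: S_def)
  then have "Max S \<in> S" using finS by simp
  then obtain x where xr: "mat_rank (completion k x C) = rF"
    using mr by (auto simp: S_def maxRank_def)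
  define Cx where "Cx = completion k x C"
  have Cxc: "Cx \<in> carrier_mat rF rF" using Cdim by (auto simp: Cx_def)
  have detCx: "det Cx \<noteq> 0"
    using vec_space.det_rank_iff[OF Cxc] xr Cdim by (simp add: Cx_def mat_rank_def)
  define Mx where "Mx = (\<lambda>l c. evp k x (M $$ (l,c)))"
  define g where "g = (\<lambda>j. sorted_list_of_set G ! j)"
  define h where "h = (\<lambda>j. sorted_list_of_set H ! j)"
  have gG: "j < sG \<Longrightarrow> g j \<in> G" for j using sorted_nth_mem[OF finG] by (simp add: g_def sG_def)
  have hH: "j < rF \<Longrightarrow> h j \<in> H" for j using sorted_nth_mem[OF finH] cardH by (simp add: h_def)
  have Cx_entry: "Cx $$ (i,j) = (\<Sum>l<m. RF $$ (m - rF + i, l) * Mx l (h j))"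
    if "i < rF" "j < rF" for i j
  proof -
    have hn: "h j < n" using hH[OF that(2)] by (auto simp: H_def)
    have "Cx $$ (i,j) = evp k x (C $$ (i,j))" using that Cdim by (simp add: Cx_def completion_entry)
    also have "C $$ (i,j) = const_mult RF (mult_QF M F) $$ (m - rF + i, sF + j)"
      using that RF(4) by (simp add: C_def block_entry)
    also have "evp k x \<dots> = (\<Sum>l<m. RF $$ (m - rF + i, l) * evp k x (mult_QF M F $$ (l, sF + j)))"
      using that RF by (subst evp_const_mult) (auto simp: n_def m_def)
    also have "\<dots> = (\<Sum>l<m. RF $$ (m - rF + i, l) * Mx l (h j))"
    proof (rule sum.cong[OF refl])
      fix l assume "l \<in> {..<m}"
      then show "RF $$ (m - rF + i, l) * evp k x (mult_QF M F $$ (l, sF + j)) = RF $$ (m - rF + i, l) * Mx l (h j)"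
        using that RF(4) col_order_H[OF finF, of n j]
        by (simp add: mult_QF_entry m_def n_def Mx_def h_def H_def sF_def)
    qed
    finally show ?thesis .
  qed
  have GZ': "(\<Sum>l<m. RG $$ (a, l) * Mx l (g j)) = 0" if "a < m" "m - rG \<le> a" "j < sG" for a j
  proof -
    have e: "m - rG + (a - (m - rG)) = a" using that by simp
    have "a - (m - rG) < rG" using that by linarith
    then have "const_mult RG (mult_QF M G) $$ (m - rG + (a - (m - rG)), j) = (\<lambda>_. 0)"
      using GZ that(3) by blast
    then have "0 = evp k x (const_mult RG (mult_QF M G) $$ (a, j))"
      unfolding e by simp
    also have "\<dots> = (\<Sum>l<m. RG $$ (a, l) * evp k x (mult_QF M G $$ (l, j)))"
      using that RG RG(4) by (subst evp_const_mult) (auto simp: n_def m_def)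
    also have "\<dots> = (\<Sum>l<m. RG $$ (a, l) * Mx l (g j))"
    proof (rule sum.cong[OF refl])
      fix l assume "l \<in> {..<m}"
      then show "RG $$ (a, l) * evp k x (mult_QF M G $$ (l, j)) = RG $$ (a, l) * Mx l (g j)"
        using that RG(4) col_order_F[OF finG, of j n]
        by (simp add: mult_QF_entry m_def n_def Mx_def g_def sG_def)
    qed
    finally show ?thesis by simp
  qed
  define p where "p = m - rG"
  have psG: "p < sG" using RG mn by (simp add: p_def)
  define T where "T = mat sG sG (\<lambda>(a,j). if a < p then (\<Sum>l<m. RG $$ (a, l) * Mx l (g j)) else 0)"
  have Tc: "T \<in> carrier_mat sG sG" by (simp add: T_def)
  have "T = mat\<^sub>r sG sG (\<lambda>i. if i = sG - 1 then 0\<^sub>v sG else row T i)"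
    by (rule eq_matI) (use psG in \<open>auto simp: T_def\<close>)
  then have "det T = 0" using det_row_0[of "sG - 1" sG "\<lambda>i. row T i"] sGpos Tc
    by (auto simp: Pi_def)
  then obtain w where w: "w \<in> carrier_vec sG" "w \<noteq> 0\<^sub>v sG" "T *\<^sub>v w = 0\<^sub>v sG"
    using det_0_iff_vec_prod_zero_field[OF Tc] by blast
  define u where "u = vec m (\<lambda>l. \<Sum>j<sG. Mx l (g j) * w $ j)"
  have "RG *\<^sub>v u = 0\<^sub>v m"
  proof (rule eq_vecI)
    fix a assume a: "a < dim_vec (0\<^sub>v m :: 'a vec)"
    then have am: "a < m" by simp
    have "(RG *\<^sub>v u) $ a = (\<Sum>l<m. RG $$ (a, l) * (\<Sum>j<sG. Mx l (g j) * w $ j))"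
      using am RG(1) by (simp add: mult_mat_vec_def scalar_prod_def u_def atLeast0LessThan)
    also have "\<dots> = (\<Sum>j<sG. (\<Sum>l<m. RG $$ (a, l) * Mx l (g j)) * w $ j)"
      by (simp add: sum_distrib_left sum_distrib_right algebra_simps sum.swap[of _ "{..<sG}"])
    also have "\<dots> = 0"
    proof (cases "a < p")
      case True
      have "(T *\<^sub>v w) $ a = 0" using w(3) True psG by simp
      moreover have "(T *\<^sub>v w) $ a = (\<Sum>j<sG. (\<Sum>l<m. RG $$ (a, l) * Mx l (g j)) * w $ j)"
        using True psG w(1) by (simp add: T_def mult_mat_vec_def scalar_prod_def atLeast0LessThan)
      ultimately show ?thesis by simp
    next
      case False
      then show ?thesis using GZ'[OF am] by (simp add: p_def)
    qed
    finally show "(RG *\<^sub>v u) $ a = 0\<^sub>v m $ a" using am by simp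
  qed (use RG(1) in simp)
  have u0: "u = 0\<^sub>v m"
  proof -
    obtain B where B: "inverts_mat RG B" "inverts_mat B RG"
      using RG(2) by (auto simp: invertible_mat_def)
    have RGB: "RG * B = 1\<^sub>m m" using B RG(1) by (auto simp: inverts_mat_def)
    have BRG0: "B * RG = 1\<^sub>m (dim_row B)" using B by (auto simp: inverts_mat_def)
    have d1: "dim_col (B * RG) = dim_row B" unfolding BRG0 by (rule index_one_mat(3))
    have d2: "dim_col (B * RG) = dim_col RG" by (rule index_mult_mat(3))
    have dr: "dim_row B = m" using d1 d2 RG(1) by auto
    have BRG: "B * RG = 1\<^sub>m m" using BRG0 unfolding dr .
    have d3: "dim_col (RG * B) = m" unfolding RGB by (rule index_one_mat(3))
    have d4: "dim_col (RG * B) = dim_col B" by (rule index_mult_mat(3))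
    have dc: "dim_col B = m" using d3 d4 by simp
    have Bc: "B \<in> carrier_mat m m" using dr dc by (intro carrier_matI) simp_all
    have uc: "u \<in> carrier_vec m" by (simp add: u_def)
    have "u = (B * RG) *\<^sub>v u" unfolding BRG using uc by simp
    also have "\<dots> = B *\<^sub>v (RG *\<^sub>v u)" using Bc RG(1) uc by (simp add: assoc_mult_mat_vec)
    also have "\<dots> = 0\<^sub>v m" using \<open>RG *\<^sub>v u = 0\<^sub>v m\<close> Bc by auto
    finally show ?thesis .
  qed
  define v' where "v' = (\<lambda>c. \<Sum>j<sG. if g j = c then w $ j else 0)"
  have v'F: "v' c = 0" if "c \<notin> H" for c
    unfolding v'_def
  proof (rule sum.neutral, rule ballI)
    fix j assume "j \<in> {..<sG}"
    then have "g j \<in> H" using gG GH by blast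
    then show "(if g j = c then w $ j else 0) = 0" using that by auto
  qed
  have swap: "(\<Sum>c\<in>H. f c * v' c) = (\<Sum>j<sG. f (g j) * w $ j)" for f
  proof -
    have "(\<Sum>c\<in>H. f c * v' c) = (\<Sum>j<sG. \<Sum>c\<in>H. if g j = c then f c * w $ j else 0)"
      unfolding v'_def by (simp add: sum_distrib_left if_distrib sum.swap[of _ H] cong: if_cong)
    also have "\<dots> = (\<Sum>j<sG. f (g j) * w $ j)"
      using gG GH finH by (intro sum.cong refl) (auto simp: sum.delta)
    finally show ?thesis .
  qed
  define z where "z = vec rF (\<lambda>j. v' (h j))"
  have zc: "z \<in> carrier_vec rF" by (simp add: z_def)
  have "Cx *\<^sub>v z = 0\<^sub>v rF"
  proof (rule eq_vecI)
    fix i assume "i < dim_vec (0\<^sub>v rF :: 'a vec)"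
    then have i: "i < rF" by simp
    define f where "f = (\<lambda>c. \<Sum>l<m. RF $$ (m - rF + i, l) * Mx l c)"
    have "(Cx *\<^sub>v z) $ i = (\<Sum>j<rF. f (h j) * v' (h j))"
      using i Cxc by (simp add: mult_mat_vec_def scalar_prod_def z_def Cx_entry f_def atLeast0LessThan)
    also have "\<dots> = (\<Sum>c\<in>H. f c * v' c)"
      using sum_sorted_nth[OF finH, of "\<lambda>c. f c * v' c"] cardH by (simp add: h_def)
    also have "\<dots> = (\<Sum>j<sG. f (g j) * w $ j)" by (rule swap)
    also have "\<dots> = (\<Sum>l<m. RF $$ (m - rF + i, l) * u $ l)"
      by (simp add: f_def u_def sum_distrib_left sum_distrib_right algebra_simps sum.swap[of _ "{..<sG}"])
    also have "\<dots> = 0" using u0 by simp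
    finally show "(Cx *\<^sub>v z) $ i = 0\<^sub>v rF $ i" using i by simp
  qed (use Cxc in simp)
  moreover have "z \<noteq> 0\<^sub>v rF"
  proof -
    obtain i0 where i0: "i0 < sG" "w $ i0 \<noteq> 0" using w(1,2) by (metis carrier_vecD eq_vecI index_zero_vec)
    have "g i0 \<in> H" using gG[OF i0(1)] GH by blast
    then obtain j0 where j0: "j0 < rF" "h j0 = g i0"
      using sorted_nth_surj[OF finH] cardH by (auto simp: h_def)
    have "v' (g i0) = (\<Sum>j<sG. if j = i0 then w $ j else 0)"
      unfolding v'_def
    proof (rule sum.cong[OF refl])
      fix j assume "j \<in> {..<sG}"
      then have "g j = g i0 \<longleftrightarrow> j = i0"
        using sorted_nth_inj[OF finG, of j i0] i0(1) by (auto simp: g_def sG_def)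
      then show "(if g j = g i0 then w $ j else 0) = (if j = i0 then w $ j else 0)" by simp
    qed
    also have "\<dots> = w $ i0" using i0(1) by simp
    finally have "z $ j0 \<noteq> 0" using j0 i0 by (simp add: z_def)
    then show ?thesis using j0(1) by auto
  qed
  ultimately show False using det_0_iff_vec_prod_zero_field[OF Cxc] detCx zc by blast
qed

end
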